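(* Let $c(t)$ be a solution of Hamilton's equations for the Kepler–Heisenberg Hamiltonian defined on an open interval $I$, and suppose $z(t) = 0$ for all $t\in I$. Then the projected curve $t\mapsto (x(t),y(t))$ is contained in a straight line through the origin of the $xy$-plane.
   Context: Phase space is $T^*\mathbb R^3$ with coordinates $(x,y,z,p_x,p_y,p_z)$. Set $P_X = p_x - \tfrac12 y p_z$, $P_Y = p_y + \tfrac12 x p_z$. The Kepler–Heisenberg Hamiltonian is $H = \tfrac12(P_X^2 + P_Y^2) - \frac{1}{8\pi\sqrt{(x^2+y^2)^2+16z^2}}$, defined away from $x=y=z=0$. *)

theory Defs
  imports "HOL-Analysis.Analysis"
begin

definition KH_PX :: "real \<Rightarrow> real \<Rightarrow> real \<Rightarrow> real \<Rightarrow> real \<Rightarrow> real \<Rightarrow> real" where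
  "KH_PX x y z px py pz = px - 1/2 * y * pz"

definition KH_PY :: "real \<Rightarrow> real \<Rightarrow> real \<Rightarrow> real \<Rightarrow> real \<Rightarrow> real \<Rightarrow> real" where
  "KH_PY x y z px py pz = py + 1/2 * x * pz"

definition KH_H :: "real \<Rightarrow> real \<Rightarrow> real \<Rightarrow> real \<Rightarrow> real \<Rightarrow> real \<Rightarrow> real" where
  "KH_H x y z px py pz =
     1/2 * ((KH_PX x y z px py pz)\<^sup>2 + (KH_PY x y z px py pz)\<^sup>2)
     - 1 / (8 * pi * sqrt ((x\<^sup>2 + y\<^sup>2)\<^sup>2 + 16 * z\<^sup>2))"

text \<open>A curve c(t) = (x,y,z,px,py,pz)(t) on I solves Hamilton's equations for KH_H:
  it stays in the domain (away from x=y=z=0), each coordinate is differentiable, and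
  q_i' = dH/dp_i, p_i' = - dH/dq_i (partial derivatives along the curve).\<close>

definition KH_hamilton_solution ::
  "real set \<Rightarrow> (real \<Rightarrow> real) \<Rightarrow> (real \<Rightarrow> real) \<Rightarrow> (real \<Rightarrow> real) \<Rightarrow>
   (real \<Rightarrow> real) \<Rightarrow> (real \<Rightarrow> real) \<Rightarrow> (real \<Rightarrow> real) \<Rightarrow> bool" where
  "KH_hamilton_solution I x y z px py pz \<longleftrightarrow>
    (\<forall>t\<in>I.
      \<not> (x t = 0 \<and> y t = 0 \<and> z t = 0) \<and>
      (\<exists>d. (x has_real_derivative d) (at t) \<and>
           ((\<lambda>s. KH_H (x t) (y t) (z t) s (py t) (pz t)) has_real_derivative d) (at (px t))) \<and>
      (\<exists>d. (y has_real_derivative d) (at t) \<and>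
           ((\<lambda>s. KH_H (x t) (y t) (z t) (px t) s (pz t)) has_real_derivative d) (at (py t))) \<and>
      (\<exists>d. (z has_real_derivative d) (at t) \<and>
           ((\<lambda>s. KH_H (x t) (y t) (z t) (px t) (py t) s) has_real_derivative d) (at (pz t))) \<and>
      (\<exists>d. (px has_real_derivative d) (at t) \<and>
           ((\<lambda>s. KH_H s (y t) (z t) (px t) (py t) (pz t)) has_real_derivative (- d)) (at (x t))) \<and>
      (\<exists>d. (py has_real_derivative d) (at t) \<and>
           ((\<lambda>s. KH_H (x t) s (z t) (px t) (py t) (pz t)) has_real_derivative (- d)) (at (y t))) \<and>
      (\<exists>d. (pz has_real_derivative d) (at t) \<and>
           ((\<lambda>s. KH_H (x t) (y t) s (px t) (py t) (pz t)) has_real_derivative (- d)) (at (z t))))"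

end

theory Submission
  imports Defs
begin

lemma H_dpx: "((\<lambda>s. KH_H a b c s e f) has_real_derivative (KH_PX a b c px e f)) (at px)"
  unfolding KH_H_def KH_PX_def KH_PY_def
  apply (rule derivative_eq_intros refl)+
  by simp

lemma H_dpy: "((\<lambda>s. KH_H a b c d s f) has_real_derivative (KH_PY a b c d py f)) (at py)"
  unfolding KH_H_def KH_PX_def KH_PY_def
  apply (rule derivative_eq_intros refl)+
  by simp

lemma H_dpz: "((\<lambda>s. KH_H a b c d e s) has_real_derivative
   (KH_PX a b c d e pz * (- b/2) + KH_PY a b c d e pz * (a/2))) (at pz)"
  unfolding KH_H_def KH_PX_def KH_PY_def
  apply (rule derivative_eq_intros refl)+
  by (simp add: algebra_simps)

lemma key:
  assumes "open I" "KH_hamilton_solution I x y z px py pz" "\<forall>t\<in>I. z t = 0" "t \<in> I"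
  shows "\<exists>X Y. (x has_real_derivative X) (at t) \<and> (y has_real_derivative Y) (at t)
     \<and> x t * Y - y t * X = 0 \<and> (x t, y t) \<noteq> (0,0)"
proof -
  have h: "\<not> (x t = 0 \<and> y t = 0 \<and> z t = 0)"
   "(\<exists>d. (x has_real_derivative d) (at t) \<and>
           ((\<lambda>s. KH_H (x t) (y t) (z t) s (py t) (pz t)) has_real_derivative d) (at (px t)))"
    "(\<exists>d. (y has_real_derivative d) (at t) \<and>
           ((\<lambda>s. KH_H (x t) (y t) (z t) (px t) s (pz t)) has_real_derivative d) (at (py t)))"
    "(\<exists>d. (z has_real_derivative d) (at t) \<and>
           ((\<lambda>s. KH_H (x t) (y t) (z t) (px t) (py t) s) has_real_derivative d) (at (pz t)))"
    using assms(2,4) unfolding KH_hamilton_solution_def by blast+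
  obtain X where X: "(x has_real_derivative X) (at t)"
    "((\<lambda>s. KH_H (x t) (y t) (z t) s (py t) (pz t)) has_real_derivative X) (at (px t))"
    using h(2) by blast
  obtain Y where Y: "(y has_real_derivative Y) (at t)"
    "((\<lambda>s. KH_H (x t) (y t) (z t) (px t) s (pz t)) has_real_derivative Y) (at (py t))"
    using h(3) by blast
  obtain Z where Z: "(z has_real_derivative Z) (at t)"
    "((\<lambda>s. KH_H (x t) (y t) (z t) (px t) (py t) s) has_real_derivative Z) (at (pz t))"
    using h(4) by blast
  have X': "X = KH_PX (x t) (y t) (z t) (px t) (py t) (pz t)"
    using DERIV_unique[OF X(2) H_dpx] .
  have Y': "Y = KH_PY (x t) (y t) (z t) (px t) (py t) (pz t)"
    using DERIV_unique[OF Y(2) H_dpy] .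
  have ev: "eventually (\<lambda>s. z s = 0) (nhds t)"
    using assms(1,3,4) eventually_nhds by blast
  have "(z has_real_derivative 0) (at t)"
    using DERIV_cong_ev[OF refl ev refl] by simp
  then have Z0: "Z = 0" using DERIV_unique[OF Z(1)] by blast
  have "Z = X * (- y t / 2) + Y * (x t / 2)"
    using DERIV_unique[OF Z(2) H_dpz] X' Y' by simp
  then have "x t * Y - y t * X = 0" using Z0 by (simp add: algebra_simps)
  then show ?thesis using X(1) Y(1) h(1) assms(3,4) by auto
qed

theorem mainTheorem4:
  fixes I :: "real set" and x y z px py pz :: "real \<Rightarrow> real"
  assumes "open I" and "is_interval I"
    and "KH_hamilton_solution I x y z px py pz"
    and "\<forall>t\<in>I. z t = 0"
  shows "\<exists>a b. (a, b) \<noteq> (0::real, 0::real) \<and> (\<forall>t\<in>I. a * x t + b * y t = 0)"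
proof (cases "I = {}")
  case True then show ?thesis by (intro exI[of _ 1] exI[of _ 0]) simp
next
  case False
  then obtain t0 where t0: "t0 \<in> I" by blast
  define x0 where "x0 = x t0"
  define y0 where "y0 = y t0"
  have nz0: "(x0, y0) \<noteq> (0,0)" using key[OF assms(1,3,4) t0] x0_def y0_def by auto
  define g where "g t = (x t * y0 - y t * x0)^2 / ((x t)^2 + (y t)^2)" for t
  have D: "(g has_real_derivative 0) (at t within I)" if t: "t \<in> I" for t
  proof -
    obtain X Y where XY: "(x has_real_derivative X) (at t)" "(y has_real_derivative Y) (at t)"
      "x t * Y - y t * X = 0" "(x t, y t) \<noteq> (0,0)"
      using key[OF assms(1,3,4) t] by blast
    have s: "(x t)^2 + (y t)^2 \<noteq> 0" using XY(4) by (simp add: sum_power2_eq_zero_iff)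
    have "(g has_real_derivative
       ((2 * (x t * y0 - y t * x0) * (X * y0 - Y * x0)) * ((x t)^2 + (y t)^2)
         - (x t * y0 - y t * x0)^2 * (2 * x t * X + 2 * y t * Y)) / ((x t)^2 + (y t)^2)^2) (at t)"
      unfolding g_def
      apply (rule derivative_eq_intros XY(1) XY(2) refl)+
      using s apply simp
      apply (simp add: power2_eq_square field_simps)
      done
    moreover have "(2 * (x t * y0 - y t * x0) * (X * y0 - Y * x0)) * ((x t)^2 + (y t)^2)
         - (x t * y0 - y t * x0)^2 * (2 * x t * X + 2 * y t * Y) =
         2 * (x t * y0 - y t * x0) * (y t * X - x t * Y) * (y t * y0 + x t * x0)"
      by (simp add: power2_eq_square algebra_simps)
    ultimately have "(g has_real_derivative 0) (at t)" using XY(3) by simp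
    then show ?thesis by (rule has_field_derivative_at_within)
  qed
  obtain c where c: "\<forall>t\<in>I. g t = c"
    using has_field_derivative_zero_constant[OF is_interval_convex[OF assms(2)] D] by blast
  have "g t0 = 0" unfolding g_def x0_def y0_def by simp
  then have "\<forall>t\<in>I. g t = 0" using c t0 by metis
  have "\<forall>t\<in>I. y0 * x t + (- x0) * y t = 0"
  proof
    fix t assume t: "t \<in> I"
    have "(x t, y t) \<noteq> (0,0)" using key[OF assms(1,3,4) t] by blast
    then have "(x t)^2 + (y t)^2 \<noteq> 0" by (simp add: sum_power2_eq_zero_iff)
    with \<open>\<forall>t\<in>I. g t = 0\<close> t show "y0 * x t + (- x0) * y t = 0" unfolding g_def
      by (simp add: algebra_simps) (metis)
  qed
  moreover have "(y0, - x0) \<noteq> (0,0)" using nz0 by auto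
  ultimately show ?thesis by blast
qed

end
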